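(* If $(C_1,F_1)$ and $(C_2,F_2)$ are antlers in an undirected multigraph $G$, then $(C_1\setminus(C_2\cup F_2),\,F_1\setminus(C_2\cup F_2))$ is an antler in $G-(C_2\cup F_2)$.
   Context: A feedback vertex set (FVS) of $G$ is a set $X\subseteq V(G)$ with $G-X$ acyclic (self-loops and pairs of parallel edges count as cycles); $\mathrm{fvs}(G)$ is the minimum size of a FVS. For disjoint $X,Y$, $e(X,Y)$ is the number of edges between $X$ and $Y$. A feedback vertex cut (FVC) in $G$ is a pair of disjoint sets $C,F\subseteq V(G)$ such that $G[F]$ is a forest and every tree $T$ of $G[F]$ satisfies $e(V(T),V(G)\setminus(C\cup F))\le1$. An antler in $G$ is a FVC $(C,F)$ with $|C|\le\mathrm{fvs}(G[C\cup F])$. *)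

theory Defs
  imports "HOL-Library.Multiset" "HOL-Library.Uprod"
begin

text \<open>A finite undirected multigraph: a vertex set and a multiset of unordered
  pairs of vertices (edges); an edge Upair v v is a self-loop, and the multiplicity
  of Upair u v is the number of parallel edges between u and v.\<close>

record 'a mgraph =
  verts :: "'a set"
  edges :: "'a uprod multiset"

definition wf_mgraph :: "'a mgraph \<Rightarrow> bool" where
  "wf_mgraph G \<longleftrightarrow> finite (verts G) \<and> (\<forall>e\<in>#edges G. set_uprod e \<subseteq> verts G)"

definition induced :: "'a mgraph \<Rightarrow> 'a set \<Rightarrow> 'a mgraph" where
  "induced G S = \<lparr>verts = verts G \<inter> S,
                  edges = filter_mset (\<lambda>e. set_uprod e \<subseteq> verts G \<inter> S) (edges G)\<rparr>"

definition delete :: "'a mgraph \<Rightarrow> 'a set \<Rightarrow> 'a mgraph" where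
  "delete G X = induced G (verts G - X)"

text \<open>A cycle: k \<ge> 1 distinct vertices v_0..v_(k-1) together with k distinct edge
  occurrences joining v_i and v_(i+1 mod k).  k = 1 is a self-loop, k = 2 a pair of
  parallel edges.\<close>
definition has_cycle :: "'a mgraph \<Rightarrow> bool" where
  "has_cycle G \<longleftrightarrow> (\<exists>vs. vs \<noteq> [] \<and> distinct vs \<and> set vs \<subseteq> verts G \<and>
     mset (map (\<lambda>i. Upair (vs ! i) (vs ! ((i + 1) mod length vs))) [0..<length vs])
       \<subseteq># edges G)"

definition forest :: "'a mgraph \<Rightarrow> bool" where
  "forest G \<longleftrightarrow> \<not> has_cycle G"

definition is_fvs :: "'a mgraph \<Rightarrow> 'a set \<Rightarrow> bool" where
  "is_fvs G X \<longleftrightarrow> X \<subseteq> verts G \<and> forest (delete G X)"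

definition fvs :: "'a mgraph \<Rightarrow> nat" where
  "fvs G = (LEAST k. \<exists>X. is_fvs G X \<and> card X = k)"

definition e_between :: "'a mgraph \<Rightarrow> 'a set \<Rightarrow> 'a set \<Rightarrow> nat" where
  "e_between G X Y = size (filter_mset (\<lambda>e. \<exists>x\<in>X. \<exists>y\<in>Y. e = Upair x y) (edges G))"

definition adj_rel :: "'a mgraph \<Rightarrow> ('a \<times> 'a) set" where
  "adj_rel G = {(x, y). x \<in> verts G \<and> y \<in> verts G \<and> Upair x y \<in># edges G}"

definition component :: "'a mgraph \<Rightarrow> 'a \<Rightarrow> 'a set" where
  "component G v = {w. (v, w) \<in> (adj_rel G)\<^sup>*}"

definition components :: "'a mgraph \<Rightarrow> 'a set set" where
  "components G = component G ` verts G"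

definition fvc :: "'a mgraph \<Rightarrow> 'a set \<Rightarrow> 'a set \<Rightarrow> bool" where
  "fvc G C F \<longleftrightarrow> C \<subseteq> verts G \<and> F \<subseteq> verts G \<and> C \<inter> F = {} \<and>
     forest (induced G F) \<and>
     (\<forall>T \<in> components (induced G F). e_between G T (verts G - (C \<union> F)) \<le> 1)"

definition antler :: "'a mgraph \<Rightarrow> 'a set \<Rightarrow> 'a set \<Rightarrow> bool" where
  "antler G C F \<longleftrightarrow> fvc G C F \<and> card C \<le> fvs (induced G (C \<union> F))"

end

theory Submission
  imports Defs
begin

definition cyc :: "'a list \<Rightarrow> 'a uprod list" where
  "cyc vs = map (\<lambda>i. Upair (vs ! i) (vs ! ((i + 1) mod length vs))) [0..<length vs]"

lemma has_cycle_cyc: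
  "has_cycle H \<longleftrightarrow> (\<exists>vs. vs \<noteq> [] \<and> distinct vs \<and> set vs \<subseteq> verts H \<and> mset (cyc vs) \<subseteq># edges H)"
  by (simp add: has_cycle_def cyc_def)

lemma cyc_set: "e \<in> set (cyc vs) \<Longrightarrow> set_uprod e \<subseteq> set vs"
proof -
  assume "e \<in> set (cyc vs)"
  then obtain i where i: "i < length vs" "e = Upair (vs ! i) (vs ! ((i + 1) mod length vs))"
    by (auto simp: cyc_def)
  then have "(i + 1) mod length vs < length vs" by (intro mod_less_divisor) (use i(1) in linarith)
  with i show ?thesis by auto
qed

lemma has_cycle_induced:
  "has_cycle (induced G P) \<longleftrightarrow>
    (\<exists>vs. vs \<noteq> [] \<and> distinct vs \<and> set vs \<subseteq> verts G \<inter> P \<and> mset (cyc vs) \<subseteq># edges G)"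
proof
  assume "has_cycle (induced G P)"
  then obtain vs where "vs \<noteq> []" "distinct vs" "set vs \<subseteq> verts G \<inter> P"
    "mset (cyc vs) \<subseteq># edges (induced G P)"
    unfolding has_cycle_cyc by (auto simp: induced_def)
  moreover have "edges (induced G P) \<subseteq># edges G" by (simp add: induced_def)
  ultimately show "\<exists>vs. vs \<noteq> [] \<and> distinct vs \<and> set vs \<subseteq> verts G \<inter> P \<and> mset (cyc vs) \<subseteq># edges G"
    using subset_mset.order_trans by blast
next
  assume "\<exists>vs. vs \<noteq> [] \<and> distinct vs \<and> set vs \<subseteq> verts G \<inter> P \<and> mset (cyc vs) \<subseteq># edges G"
  then obtain vs where v: "vs \<noteq> []" "distinct vs" "set vs \<subseteq> verts G \<inter> P"
    "mset (cyc vs) \<subseteq># edges G" by blast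
  have "filter_mset (\<lambda>_. True) (mset (cyc vs)) \<subseteq># filter_mset (\<lambda>e. set_uprod e \<subseteq> verts G \<inter> P) (edges G)"
    apply (rule filter_mset_mono_strong[OF v(4)])
    using cyc_set v(3) by fastforce
  then have "mset (cyc vs) \<subseteq># edges (induced G P)" by (simp add: induced_def)
  then show "has_cycle (induced G P)" unfolding has_cycle_cyc using v by (auto simp: induced_def)
qed

lemma forest_induced_mono:
  "forest (induced G P) \<Longrightarrow> verts G \<inter> Q \<subseteq> verts G \<inter> P \<Longrightarrow> forest (induced G Q)"
  unfolding forest_def has_cycle_induced by blast

lemma induced_induced: "induced (induced G P) Q = induced G (P \<inter> Q)"
  by (simp add: induced_def filter_filter_mset Int_assoc) (rule filter_mset_cong0, blast)

lemma induced_cong: "verts G \<inter> P = verts G \<inter> Q \<Longrightarrow> induced G P = induced G Q"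
  by (simp add: induced_def)

lemma is_fvs_induced:
  "is_fvs (induced G P) X \<longleftrightarrow> X \<subseteq> verts G \<inter> P \<and> forest (induced G (verts G \<inter> P - X))"
proof -
  have "delete (induced G P) X = induced G (verts G \<inter> P - X)"
    unfolding delete_def induced_induced by (rule induced_cong) (auto simp: induced_def)
  then show ?thesis by (simp add: is_fvs_def induced_def)
qed

lemma fvs_le: "is_fvs H X \<Longrightarrow> fvs H \<le> card X"
  unfolding fvs_def by (rule Least_le) blast

lemma fvs_ex: "\<exists>X. is_fvs H X \<and> card X = fvs H"
proof -
  have "is_fvs H (verts H)"
    unfolding is_fvs_def forest_def has_cycle_cyc by (auto simp: delete_def induced_def)
  then have "\<exists>k X. is_fvs H X \<and> card X = k" by blast
  then show ?thesis unfolding fvs_def by (rule LeastI_ex)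
qed

lemma cyc_boundary:
  fixes p q n :: nat
  assumes "p < n" "q < n" "P p" "\<not> P q"
  shows "\<exists>i<n. P i \<and> \<not> P ((i + 1) mod n)"
proof (rule ccontr)
  assume "\<not> ?thesis"
  then have step: "\<And>i. i < n \<Longrightarrow> P i \<Longrightarrow> P ((i + 1) mod n)" by blast
  have "P ((p + k) mod n)" for k
  proof (induction k)
    case 0 then show ?case using assms by simp
  next
    case (Suc k)
    have "(p + k) mod n < n" using assms(1) by simp
    from step[OF this Suc] show ?case by (simp add: mod_Suc_eq)
  qed
  from this[of "q + n - p"] have "P ((q + n) mod n)" using assms(1) by simp
  then show False using assms by simp
qed

lemma in_cyc_edges:
  assumes "i < length vs"
  shows "Upair (vs ! i) (vs ! ((i + 1) mod length vs)) \<in># mset (cyc vs)"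
  using assms by (auto simp: cyc_def)

lemma component_closed:
  assumes "w \<in> component (induced G F) u" "x \<in> verts G \<inter> F" "w \<in> verts G \<inter> F"
    "Upair w x \<in># edges G"
  shows "x \<in> component (induced G F) u"
proof -
  have "(w, x) \<in> adj_rel (induced G F)"
    using assms by (auto simp: adj_rel_def induced_def)
  then show ?thesis using assms(1) unfolding component_def
    by (auto intro: rtrancl_into_rtrancl)
qed

lemma component_sub:
  assumes "u \<in> verts G \<inter> F"
  shows "component (induced G F) u \<subseteq> verts G \<inter> F"
proof
  fix w assume "w \<in> component (induced G F) u"
  then have "(u, w) \<in> (adj_rel (induced G F))\<^sup>*" by (simp add: component_def)
  then show "w \<in> verts G \<inter> F"
    by (induction rule: rtrancl_induct) (use assms in \<open>auto simp: adj_rel_def induced_def\<close>)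
qed

lemma component_self: "u \<in> component H u"
  by (simp add: component_def)

lemma forest_union:
  assumes FR: "F \<inter> R = {}" and fF: "forest (induced G F)" and fR: "forest (induced G R)"
    and eb: "\<forall>T \<in> components (induced G F). e_between G T R \<le> 1"
  shows "forest (induced G (F \<union> R))"
proof (rule ccontr)
  assume "\<not> forest (induced G (F \<union> R))"
  then obtain vs where v: "vs \<noteq> []" "distinct vs" "set vs \<subseteq> verts G \<inter> (F \<union> R)"
    "mset (cyc vs) \<subseteq># edges G"
    unfolding forest_def has_cycle_induced by blast
  define n where "n = length vs"
  have n0: "0 < n" using v(1) by (simp add: n_def)
  show False
  proof (cases "\<exists>v\<in>set vs. v \<in> F")
    case False
    then have "set vs \<subseteq> verts G \<inter> R" using v(3) by blast
    then show False using fR v unfolding forest_def has_cycle_induced by blast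
  next
    case True
    then obtain p where p: "p < n" "vs ! p \<in> F" unfolding n_def by (metis in_set_conv_nth)
    define u where "u = vs ! p"
    have uV: "u \<in> verts G \<inter> F" using p v(3) nth_mem[of p vs] by (auto simp: u_def n_def)
    define T where "T = component (induced G F) u"
    have TF: "T \<subseteq> verts G \<inter> F" unfolding T_def by (rule component_sub[OF uV])
    have Tc: "T \<in> components (induced G F)"
      using uV by (auto simp: T_def components_def induced_def)
    have pT: "vs ! p \<in> T" by (simp add: T_def u_def component_self)
    show False
    proof (cases "set vs \<subseteq> T")
      case True
      then have "set vs \<subseteq> verts G \<inter> F" using TF by blast
      then show False using fF v unfolding forest_def has_cycle_induced by blast
    next
      case False
      then obtain q where q: "q < n" "vs ! q \<notin> T" unfolding n_def by (metis in_set_conv_nth subsetI)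
      have key: "vs ! k \<in> R" if "k < n" "vs ! k \<notin> T" "vs ! k' \<in> T" "k' < n"
        "Upair (vs ! k') (vs ! k) \<in># edges G" for k k'
      proof (rule ccontr)
        assume "vs ! k \<notin> R"
        moreover have "vs ! k \<in> set vs" using that(1) by (simp add: n_def)
        then have "vs ! k \<in> verts G \<inter> (F \<union> R)" using v(3) by blast
        ultimately have "vs ! k \<in> verts G \<inter> F" by blast
        then have "vs ! k \<in> T" using component_closed[of "vs ! k'" G F u "vs ! k"] that TF
          unfolding T_def by blast
        then show False using that by blast
      qed
      have edge: "Upair (vs ! i) (vs ! ((i + 1) mod n)) \<in># edges G" if "i < n" for i
        using in_cyc_edges[of i vs] that v(4) unfolding n_def by (meson mset_subset_eqD)
      from cyc_boundary[OF p(1) q(1), of "\<lambda>i. vs ! i \<in> T"] pT q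
      obtain i where i: "i < n" "vs ! i \<in> T" "vs ! ((i + 1) mod n) \<notin> T" by blast
      from cyc_boundary[OF q(1) p(1), of "\<lambda>i. vs ! i \<notin> T"] pT q
      obtain j where j: "j < n" "vs ! j \<notin> T" "vs ! ((j + 1) mod n) \<in> T" by blast
      have i1: "(i + 1) mod n < n" "(j + 1) mod n < n" using n0 by auto
      define P where "P = (\<lambda>e. \<exists>x\<in>T. \<exists>y\<in>R. e = Upair x y)"
      have Pi: "P (Upair (vs ! i) (vs ! ((i + 1) mod n)))"
        using key[OF i1(1) i(3) i(2) i(1) edge[OF i(1)]] i(2) unfolding P_def by blast
      have com: "Upair (vs ! j) (vs ! ((j + 1) mod n)) = Upair (vs ! ((j + 1) mod n)) (vs ! j)"
        by simp
      have jR: "vs ! j \<in> R" using key[OF j(1) j(2) j(3) i1(2)] edge[OF j(1)] unfolding com by blast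
      have Pj: "P (Upair (vs ! j) (vs ! ((j + 1) mod n)))"
        unfolding P_def com using jR j(3) by blast
      have ij: "i \<noteq> j" using i j by blast
      define f where "f = (\<lambda>i. Upair (vs ! i) (vs ! ((i + 1) mod n)))"
      define K where "K = {k. k < n \<and> P (f k)}"
      have "i \<in> K" using i(1) Pi by (simp add: K_def f_def)
      moreover have "j \<in> K" using j(1) Pj by (simp add: K_def f_def)
      moreover have "finite K" by (simp add: K_def)
      ultimately have "card {i, j} \<le> card K"
        by (intro card_mono) auto
      then have "2 \<le> card K" using ij by simp
      also have "card K = length (filter P (map f [0..<n]))"
        unfolding length_filter_conv_card K_def length_map length_upt diff_zero
        by (rule arg_cong[where f=card], rule Collect_cong) (metis add_0 diff_zero nth_map_upt)
      also have "\<dots> = size (filter_mset P (mset (map f [0..<n])))"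
        by (metis mset_filter size_mset)
      also have "\<dots> = size (filter_mset P (mset (cyc vs)))"
        unfolding cyc_def n_def f_def by simp
      also have "\<dots> \<le> size (filter_mset P (edges G))"
        by (rule size_mset_mono, rule multiset_filter_mono[OF v(4)])
      also have "\<dots> = e_between G T R" by (simp add: e_between_def P_def)
      also have "\<dots> \<le> 1" using eb Tc by blast
      finally show False by simp
    qed
  qed
qed

lemma comp_sub_comp:
  assumes "F' \<subseteq> F" "T \<in> components (induced G F')"
  shows "\<exists>T' \<in> components (induced G F). T \<subseteq> T'"
proof -
  obtain u where u: "u \<in> verts G \<inter> F'" "T = component (induced G F') u"
    using assms(2) by (auto simp: components_def induced_def)
  have "adj_rel (induced G F') \<subseteq> adj_rel (induced G F)"
    using assms(1) by (auto simp: adj_rel_def induced_def)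
  then have "T \<subseteq> component (induced G F) u"
    unfolding u(2) component_def using rtrancl_mono by blast
  moreover have "component (induced G F) u \<in> components (induced G F)"
    using u assms(1) by (auto simp: components_def induced_def)
  ultimately show ?thesis by blast
qed

lemma e_between_mono:
  assumes "edges H \<subseteq># edges G" "T \<subseteq> T'" "X \<subseteq> X'"
  shows "e_between H T X \<le> e_between G T' X'"
  unfolding e_between_def
  by (rule size_mset_mono, rule filter_mset_mono_strong[OF assms(1)]) (use assms in blast)

theorem proposition11:
  fixes G :: "'a mgraph"
  assumes "wf_mgraph G"
    and "antler G C1 F1"
    and "antler G C2 F2"
  shows "antler (delete G (C2 \<union> F2)) (C1 - (C2 \<union> F2)) (F1 - (C2 \<union> F2))"
proof -
  define V where "V = verts G"
  define A where "A = C1 \<union> F1"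
  define S where "S = C2 \<union> F2"
  have finV: "finite V" using assms(1) by (simp add: wf_mgraph_def V_def)
  have C1V: "C1 \<subseteq> V" and F1V: "F1 \<subseteq> V" and CF1: "C1 \<inter> F1 = {}"
    and fF1: "forest (induced G F1)"
    and cF1: "\<forall>T \<in> components (induced G F1). e_between G T (V - (C1 \<union> F1)) \<le> 1"
    and a1: "card C1 \<le> fvs (induced G A)"
    using assms(2) by (auto simp: antler_def fvc_def V_def A_def)
  have C2V: "C2 \<subseteq> V" and F2V: "F2 \<subseteq> V" and CF2: "C2 \<inter> F2 = {}"
    and fF2: "forest (induced G F2)"
    and cF2: "\<forall>T \<in> components (induced G F2). e_between G T (V - (C2 \<union> F2)) \<le> 1"
    and a2: "card C2 \<le> fvs (induced G S)"
    using assms(3) by (auto simp: antler_def fvc_def V_def S_def)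
  define G' where "G' = delete G S"
  have G'eq: "G' = induced G (V - S)" by (simp add: G'_def delete_def V_def)
  have vG': "verts G' = V - S" by (auto simp add: G'eq induced_def V_def)
  have eG': "edges G' \<subseteq># edges G" by (simp add: G'eq induced_def)
  have indG': "induced G' (F1 - S) = induced G (F1 - S)"
    unfolding G'eq induced_induced by (rule induced_cong) (auto simp: V_def)
  have fvc': "fvc G' (C1 - S) (F1 - S)"
    unfolding fvc_def
  proof (intro conjI ballI)
    show "C1 - S \<subseteq> verts G'" "F1 - S \<subseteq> verts G'" using C1V F1V vG' by auto
    show "(C1 - S) \<inter> (F1 - S) = {}" using CF1 by blast
    show "forest (induced G' (F1 - S))" unfolding indG'
      by (rule forest_induced_mono[OF fF1]) blast
    fix T assume "T \<in> components (induced G' (F1 - S))"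
    then obtain T' where T': "T' \<in> components (induced G F1)" "T \<subseteq> T'"
      using comp_sub_comp[of "F1 - S" F1] unfolding indG' by blast
    have "e_between G' T (verts G' - (C1 - S \<union> (F1 - S))) \<le> e_between G T' (V - (C1 \<union> F1))"
      by (rule e_between_mono[OF eG' T'(2)]) (use vG' in blast)
    also have "\<dots> \<le> 1" using cF1 T'(1) by blast
    finally show "e_between G' T (verts G' - (C1 - S \<union> (F1 - S))) \<le> 1" .
  qed
  have indA: "induced G' (C1 - S \<union> (F1 - S)) = induced G (A - S)"
    unfolding G'eq induced_induced by (rule induced_cong) (auto simp: V_def A_def)
  obtain Y where Y: "is_fvs (induced G (A - S)) Y" "card Y = fvs (induced G (A - S))"
    using fvs_ex by blast
  obtain W where W: "is_fvs (induced G (S - A)) W" "card W = fvs (induced G (S - A))"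
    using fvs_ex by blast
  obtain X where X: "is_fvs (induced G (A \<union> S)) X" "card X = fvs (induced G (A \<union> S))"
    using fvs_ex by blast
  have Ysub: "Y \<subseteq> V \<inter> (A - S)" and fY: "forest (induced G (V \<inter> (A - S) - Y))"
    using Y(1) unfolding is_fvs_induced V_def by auto
  have Wsub: "W \<subseteq> V \<inter> (S - A)" and fW: "forest (induced G (V \<inter> (S - A) - W))"
    using W(1) unfolding is_fvs_induced V_def by auto
  have Xsub: "X \<subseteq> V \<inter> (A \<union> S)" and fX: "forest (induced G (V \<inter> (A \<union> S) - X))"
    using X(1) unfolding is_fvs_induced V_def by auto
  have finY: "finite Y" "finite W" "finite X" "finite C1" "finite C2"
    using Ysub Wsub Xsub C1V C2V finV by (auto intro: finite_subset)
  have i: "is_fvs (induced G (A \<union> S)) (Y \<union> C2)"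
    unfolding is_fvs_induced
  proof
    show "Y \<union> C2 \<subseteq> verts G \<inter> (A \<union> S)" using Ysub C2V by (auto simp: V_def S_def)
    have "forest (induced G (F2 \<union> (V \<inter> (A - S) - Y)))"
    proof (rule forest_union[OF _ fF2 fY])
      show "F2 \<inter> (V \<inter> (A - S) - Y) = {}" by (auto simp: S_def)
      show "\<forall>T\<in>components (induced G F2). e_between G T (V \<inter> (A - S) - Y) \<le> 1"
      proof
        fix T assume T: "T \<in> components (induced G F2)"
        have "e_between G T (V \<inter> (A - S) - Y) \<le> e_between G T (V - (C2 \<union> F2))"
          by (rule e_between_mono) (auto simp: S_def)
        also have "\<dots> \<le> 1" using cF2 T by blast
        finally show "e_between G T (V \<inter> (A - S) - Y) \<le> 1" .
      qed
    qed
    then show "forest (induced G (verts G \<inter> (A \<union> S) - (Y \<union> C2)))"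
      by (rule forest_induced_mono) (use Ysub CF2 in \<open>auto simp: V_def S_def\<close>)
  qed
  have ii: "is_fvs (induced G A) (X \<inter> A)"
    unfolding is_fvs_induced
    using Xsub forest_induced_mono[OF fX, of "V \<inter> A - X \<inter> A"] by (auto simp: V_def)
  have iii: "is_fvs (induced G (S - A)) (X - A)"
    unfolding is_fvs_induced
    using Xsub forest_induced_mono[OF fX, of "V \<inter> (S - A) - (X - A)"] by (auto simp: V_def)
  have iv: "is_fvs (induced G S) (W \<union> (C1 \<inter> S))"
    unfolding is_fvs_induced
  proof
    show "W \<union> (C1 \<inter> S) \<subseteq> verts G \<inter> S" using Wsub C1V by (auto simp: V_def)
    have "forest (induced G ((S \<inter> F1) \<union> (V \<inter> (S - A) - W)))"
    proof (rule forest_union[OF _ _ fW])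
      show "S \<inter> F1 \<inter> (V \<inter> (S - A) - W) = {}" by (auto simp: A_def)
      show "forest (induced G (S \<inter> F1))" by (rule forest_induced_mono[OF fF1]) blast
      show "\<forall>T\<in>components (induced G (S \<inter> F1)). e_between G T (V \<inter> (S - A) - W) \<le> 1"
      proof
        fix T assume T: "T \<in> components (induced G (S \<inter> F1))"
        then obtain T' where T': "T' \<in> components (induced G F1)" "T \<subseteq> T'"
          using comp_sub_comp[of "S \<inter> F1" F1] by blast
        have "e_between G T (V \<inter> (S - A) - W) \<le> e_between G T' (V - (C1 \<union> F1))"
          by (rule e_between_mono[OF _ T'(2)]) (auto simp: A_def)
        also have "\<dots> \<le> 1" using cF1 T'(1) by blast
        finally show "e_between G T (V \<inter> (S - A) - W) \<le> 1" .
      qed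
    qed
    then show "forest (induced G (verts G \<inter> S - (W \<union> (C1 \<inter> S))))"
      by (rule forest_induced_mono) (use Wsub CF1 in \<open>auto simp: V_def A_def\<close>)
  qed
  have "card X \<le> card Y + card C2"
    using fvs_le[OF i] X(2) card_Un_le[of Y C2] by linarith
  moreover have "card C1 \<le> card (X \<inter> A)" using a1 fvs_le[OF ii] by linarith
  moreover have "card W \<le> card (X - A)" using fvs_le[OF iii] W(2) by linarith
  moreover have "card X = card (X \<inter> A) + card (X - A)"
    using finY(3) by (metis card_Int_Diff)
  moreover have "card C2 \<le> card W + card (C1 \<inter> S)"
    using a2 fvs_le[OF iv] card_Un_le[of W "C1 \<inter> S"] by linarith
  moreover have "card C1 = card (C1 - S) + card (C1 \<inter> S)"
    using finY(4) by (metis card_Int_Diff Int_commute add.commute)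
  ultimately have "card (C1 - S) \<le> fvs (induced G (A - S))"
    using Y(2) by linarith
  then have "card (C1 - S) \<le> fvs (induced G' (C1 - S \<union> (F1 - S)))" unfolding indA .
  then show ?thesis using fvc' unfolding antler_def G'_def S_def by blast
qed

end
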